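(* For every finite chain ring $R$ and every $k\ge1$, the linear simplex code $\mathcal{S}_k^\beta$ is optimal with respect to the Griesmer bound, i.e., its length $n$ satisfies $n=\sum_{i=0}^{k(\mathcal{S}_k^\beta)-1}\left\lceil\frac{d_H(\mathcal{S}_k^\beta)}{q^i}\right\rceil$.
   Context: Let $R$ be a finite commutative chain ring with maximal ideal $\langle\gamma\rangle$, nilpotency index $s$ and residue field $R/\langle\gamma\rangle\cong\mathbb{F}_q$. Fix coset representatives $T=\{e_0,\dots,e_{q-1}\}$ with $e_0=0,e_1=1$, ordered $e_0<\dots<e_{q-1}$; each $r\in R$ is uniquely $\sum_{i=0}^{s-1}r_i\gamma^i$, $r_i\in T$; order $R$ by $x>y$ iff $x_i>y_i$ in $T$ for the largest $i$ with $x_i\neq y_i$; list $R=\{\rho_0,\dots,\rho_{q^s-1}\}$ increasingly. $\mathbf{a}^{(m)}$ is the constant vector of length $m$. Define $G_1^\alpha=(\rho_0\ \cdots\ \rho_{q^s-1})$ and, for $k>1$, $G_k^\alpha$ as the matrix of $q^s$ column blocks, the $j$-th having first row $\boldsymbol{\rho_j}^{(q^{s(k-1)})}$ and $G_{k-1}^\alpha$ below. List $\langle\gamma\rangle$ increasingly as $a_0\gamma<\dots<a_{q^{s-1}-1}\gamma$. Define $G_1^\beta=(1)$ and, for $k>1$, $G_k^\beta$ as the matrix with column blocks: first a block with first row $\mathbf{1}^{(q^{s(k-1)})}$ and $G_{k-1}^\alpha$ below; then for each $j=0,\dots,q^{s-1}-1$ a block with first row the constant vector with entry $a_j\gamma$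 and $G_{k-1}^\beta$ below. $\mathcal{S}_k^\beta$ is the $R$-submodule generated by the rows of $G_k^\beta$. For a linear code $\mathcal{C}\subseteq R^n$, $d_H(\mathcal{C})$ is its minimum Hamming distance and $k(\mathcal{C})$ is the minimum rank of a free $R$-submodule $\mathcal{C}'\subseteq R^n$ with $\mathcal{C}\subseteq\mathcal{C}'$. The Griesmer bound states $n\ge\sum_{i=0}^{k(\mathcal{C})-1}\lceil d_H(\mathcal{C})/q^i\rceil$; a code is optimal with respect to it when equality holds. *)

theory Defs
  imports Complex_Main
begin

definition is_ideal :: "'a::comm_ring_1 set \<Rightarrow> bool" where
  "is_ideal I \<longleftrightarrow> 0 \<in> I \<and> (\<forall>x\<in>I. \<forall>y\<in>I. x + y \<in> I) \<and> (\<forall>x\<in>I. \<forall>r. r * x \<in> I)"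

definition maximal_ideal :: "'a::comm_ring_1 set \<Rightarrow> bool" where
  "maximal_ideal M \<longleftrightarrow> is_ideal M \<and> M \<noteq> UNIV \<and>
     (\<forall>J. is_ideal J \<and> M \<subseteq> J \<longrightarrow> J = M \<or> J = UNIV)"

definition chain_ring :: "'a::comm_ring_1 itself \<Rightarrow> bool" where
  "chain_ring _ \<longleftrightarrow> (\<forall>I J :: 'a set. is_ideal I \<and> is_ideal J \<longrightarrow> I \<subseteq> J \<or> J \<subseteq> I)"

definition pideal :: "'a::comm_ring_1 \<Rightarrow> 'a set" where
  "pideal g = range (\<lambda>r. r * g)"

text \<open>T (a list e_0,...,e_{q-1}, ordered by list position) is a complete, irredundant system
  of representatives of the cosets of the ideal generated by g.\<close>
definition coset_reps :: "'a::comm_ring_1 \<Rightarrow> 'a list \<Rightarrow> bool" where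
  "coset_reps g T \<longleftrightarrow> (\<forall>x. \<exists>!i. i < length T \<and> x - T ! i \<in> pideal g)"

text \<open>rho g s T j is the element with digits r_i = e_{(j div q^i) mod q}, i.e. the j-th
  element of R in the order (most significant digit = highest power of g).\<close>
definition rho :: "'a::comm_ring_1 \<Rightarrow> nat \<Rightarrow> 'a list \<Rightarrow> nat \<Rightarrow> 'a" where
  "rho g s T j = (\<Sum>i<s. T ! ((j div length T ^ i) mod length T) * g ^ i)"

text \<open>The elements of the ideal generated by g, listed increasingly: a_0 g < a_1 g < ...\<close>
definition gamma_list :: "'a::comm_ring_1 \<Rightarrow> nat \<Rightarrow> 'a list \<Rightarrow> 'a list" where
  "gamma_list g s T = filter (\<lambda>x. x \<in> pideal g) (map (rho g s T) [0..<length T ^ s])"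

definition ncols :: "'a list list \<Rightarrow> nat" where
  "ncols M = length (hd M)"

definition hcat :: "'a list list list \<Rightarrow> 'a list list" where
  "hcat Ms = map (\<lambda>i. concat (map (\<lambda>M. M ! i) Ms)) [0..<length (hd Ms)]"

fun Galpha :: "'a::comm_ring_1 \<Rightarrow> nat \<Rightarrow> 'a list \<Rightarrow> nat \<Rightarrow> 'a list list" where
  "Galpha g s T 0 = []"
| "Galpha g s T (Suc 0) = [map (rho g s T) [0..<length T ^ s]]"
| "Galpha g s T (Suc (Suc k)) =
     hcat (map (\<lambda>j. replicate (length T ^ (s * Suc k)) (rho g s T j) # Galpha g s T (Suc k))
               [0..<length T ^ s])"

fun Gbeta :: "'a::comm_ring_1 \<Rightarrow> nat \<Rightarrow> 'a list \<Rightarrow> nat \<Rightarrow> 'a list list" where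
  "Gbeta g s T 0 = []"
| "Gbeta g s T (Suc 0) = [[1]]"
| "Gbeta g s T (Suc (Suc k)) =
     hcat ((replicate (length T ^ (s * Suc k)) 1 # Galpha g s T (Suc k)) #
           map (\<lambda>a. replicate (ncols (Gbeta g s T (Suc k))) a # Gbeta g s T (Suc k))
               (gamma_list g s T))"

definition lincomb :: "nat \<Rightarrow> 'a::comm_ring_1 list \<Rightarrow> 'a list list \<Rightarrow> 'a list" where
  "lincomb n c vs = map (\<lambda>l. \<Sum>i<length vs. c ! i * vs ! i ! l) [0..<n]"

definition rspan :: "nat \<Rightarrow> 'a::comm_ring_1 list list \<Rightarrow> 'a list set" where
  "rspan n vs = {lincomb n c vs | c. length c = length vs}"

definition lin_indep :: "nat \<Rightarrow> 'a::comm_ring_1 list list \<Rightarrow> bool" where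
  "lin_indep n vs \<longleftrightarrow> (\<forall>c. length c = length vs \<and> lincomb n c vs = replicate n 0
                           \<longrightarrow> (\<forall>i<length vs. c ! i = 0))"

definition free_submodule_rank :: "nat \<Rightarrow> 'a::comm_ring_1 list set \<Rightarrow> nat \<Rightarrow> bool" where
  "free_submodule_rank n C' r \<longleftrightarrow>
     (\<exists>vs. length vs = r \<and> (\<forall>v\<in>set vs. length v = n) \<and> lin_indep n vs \<and> rspan n vs = C')"

definition code_rank :: "nat \<Rightarrow> 'a::comm_ring_1 list set \<Rightarrow> nat" where
  "code_rank n C = (LEAST r. \<exists>C'. C \<subseteq> C' \<and> free_submodule_rank n C' r)"

definition hamming_dist :: "'a list \<Rightarrow> 'a list \<Rightarrow> nat" where
  "hamming_dist x y = card {i. i < length x \<and> x ! i \<noteq> y ! i}"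

definition min_dist :: "'a list set \<Rightarrow> nat" where
  "min_dist C = Min {hamming_dist x y | x y. x \<in> C \<and> y \<in> C \<and> x \<noteq> y}"

definition Sbeta :: "'a::comm_ring_1 \<Rightarrow> nat \<Rightarrow> 'a list \<Rightarrow> nat \<Rightarrow> 'a list set" where
  "Sbeta g s T k = rspan (ncols (Gbeta g s T k)) (Gbeta g s T k)"

end

theory Submission
  imports Defs
begin


lemma kernel_card:
  fixes f :: "'b \<Rightarrow> 'c::ab_group_add"
  assumes fin: "finite A"
    and pc: "\<And>x y. x \<in> A \<Longrightarrow> y \<in> A \<Longrightarrow> p x y \<in> A"
    and mc: "\<And>x y. x \<in> A \<Longrightarrow> y \<in> A \<Longrightarrow> m x y \<in> A"
    and fp: "\<And>x y. x \<in> A \<Longrightarrow> y \<in> A \<Longrightarrow> f (p x y) = f x + f y"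
    and fm: "\<And>x y. x \<in> A \<Longrightarrow> y \<in> A \<Longrightarrow> f (m x y) = f x - f y"
    and pm: "\<And>x y. x \<in> A \<Longrightarrow> y \<in> A \<Longrightarrow> p (m x y) y = x"
    and mp: "\<And>x y. x \<in> A \<Longrightarrow> y \<in> A \<Longrightarrow> m (p x y) y = x"
  shows "card A = card (f ` A) * card {x\<in>A. f x = 0}"
proof -
  have fib: "card {x\<in>A. f x = b} = card {x\<in>A. f x = 0}" if bA: "b \<in> f ` A" for b
  proof -
    obtain x0 where x0: "x0 \<in> A" "f x0 = b" using bA by auto
    have "bij_betw (\<lambda>z. p z x0) {x\<in>A. f x = 0} {x\<in>A. f x = b}"
    proof (rule bij_betw_byWitness[where f' = "\<lambda>x. m x x0"])
      show "\<forall>a\<in>{x \<in> A. f x = 0}. m (p a x0) x0 = a" using mp x0 by auto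
      show "\<forall>a'\<in>{x \<in> A. f x = b}. p (m a' x0) x0 = a'" using pm x0 by auto
      show "(\<lambda>z. p z x0) ` {x \<in> A. f x = 0} \<subseteq> {x \<in> A. f x = b}" using pc fp x0 by auto
      show "(\<lambda>x. m x x0) ` {x \<in> A. f x = b} \<subseteq> {x \<in> A. f x = 0}" using mc fm x0 by auto
    qed
    then show ?thesis by (simp add: bij_betw_same_card)
  qed
  have eq: "A = (\<Union>b\<in>f ` A. {x\<in>A. f x = b})" by auto
  have "card (\<Union>b\<in>f ` A. {x\<in>A. f x = b}) = (\<Sum>b\<in>f ` A. card {x\<in>A. f x = b})"
    by (rule card_UN_disjoint) (use fin in auto)
  then have "card A = (\<Sum>b\<in>f ` A. card {x\<in>A. f x = b})" using eq by simp
  also have "\<dots> = (\<Sum>b\<in>f ` A. card {x\<in>A. f x = 0})" using fib by (rule sum.cong[OF refl])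
  finally show ?thesis by simp
qed

locale cr =
  fixes g :: "'a::{comm_ring_1,finite}" and s :: nat and T :: "'a list"
  assumes max: "maximal_ideal (pideal g)" and nil: "g ^ s = 0"
    and nil_min: "\<forall>t<s. g ^ t \<noteq> 0"
    and reps: "coset_reps g T" and T0: "T ! 0 = 0" and T1: "T ! 1 = 1"
begin

abbreviation "M \<equiv> pideal g"
abbreviation "q \<equiv> length T"

lemma pideal_iff: "x \<in> pideal a \<longleftrightarrow> (\<exists>r. x = r * a)"
  unfolding pideal_def by auto

lemma M_ideal: "is_ideal M" using max unfolding maximal_ideal_def by auto

lemma pideal_ideal: "is_ideal (pideal a)"
proof -
  have "0 \<in> pideal a" unfolding pideal_iff by (rule exI[of _ 0]) simp
  moreover have "x + y \<in> pideal a" if xy: "x \<in> pideal a" "y \<in> pideal a" for x y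
  proof -
    obtain r1 r2 where "x = r1 * a" "y = r2 * a" using xy unfolding pideal_iff by blast
    then have "x + y = (r1 + r2) * a" by (simp add: distrib_right)
    then show ?thesis unfolding pideal_iff by blast
  qed
  moreover have "r * x \<in> pideal a" if xa: "x \<in> pideal a" for x r
  proof -
    obtain r1 where "x = r1 * a" using xa unfolding pideal_iff by blast
    then have "r * x = (r * r1) * a" by (simp add: mult.assoc)
    then show ?thesis unfolding pideal_iff by blast
  qed
  ultimately show ?thesis unfolding is_ideal_def by blast
qed

lemma M_ne: "M \<noteq> UNIV" using max unfolding maximal_ideal_def by auto

lemma one_notin_M: "1 \<notin> M"
proof
  assume "1 \<in> M"
  then have "x * 1 \<in> M" for x using M_ideal unfolding is_ideal_def by blast
  then have "x \<in> M" for x by simp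
  then show False using M_ne by auto
qed

lemma s_pos: "s \<ge> 1"
proof (rule ccontr)
  assume "\<not> s \<ge> 1" then have "s = 0" by simp
  then have "(1::'a) = 0" using nil by simp
  then have "1 \<in> M" unfolding pideal_iff by (intro exI[of _ 0]) simp
  then show False using one_notin_M by simp
qed

lemma M_mult: "x \<in> M \<Longrightarrow> y * x \<in> M" using M_ideal unfolding is_ideal_def by auto
lemma M_add: "x \<in> M \<Longrightarrow> y \<in> M \<Longrightarrow> x + y \<in> M" using M_ideal unfolding is_ideal_def by auto
lemma M_minus: "x \<in> M \<Longrightarrow> y \<in> M \<Longrightarrow> x - y \<in> M"
proof -
  assume "x \<in> M" "y \<in> M"
  then have "x + (-1) * y \<in> M" using M_add M_mult by blast
  then show ?thesis by simp
qed
lemma M_zero: "0 \<in> M" using M_ideal unfolding is_ideal_def by auto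

lemma unit: assumes "x \<notin> M" shows "\<exists>y. x * y = 1"
proof -
  define J where "J = {r * x + m | r m. m \<in> M}"
  have "is_ideal J" unfolding is_ideal_def J_def
  proof (intro conjI ballI allI)
    show "0 \<in> {r * x + m |r m. m \<in> M}" using M_zero by (auto intro!: exI[of _ 0])
    fix a b assume "a \<in> {r * x + m |r m. m \<in> M}" "b \<in> {r * x + m |r m. m \<in> M}"
    then obtain r1 m1 r2 m2 where "a = r1 * x + m1" "b = r2 * x + m2" "m1 \<in> M" "m2 \<in> M" by auto
    then have "a + b = (r1 + r2) * x + (m1 + m2)" "m1 + m2 \<in> M" by (simp_all add: algebra_simps M_add)
    then show "a + b \<in> {r * x + m |r m. m \<in> M}" by blast
  next
    fix a r assume "a \<in> {r * x + m |r m. m \<in> M}"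
    then obtain r1 m1 where "a = r1 * x + m1" "m1 \<in> M" by auto
    then have "r * a = (r * r1) * x + r * m1" "r * m1 \<in> M" by (simp add: algebra_simps, simp add: M_mult)
    then show "r * a \<in> {r * x + m |r m. m \<in> M}" by blast
  qed
  moreover have "M \<subseteq> J"
  proof
    fix m assume "m \<in> M"
    moreover have "m = 0 * x + m" by simp
    ultimately show "m \<in> J" unfolding J_def by blast
  qed
  moreover have "x \<in> J"
  proof -
    have "x = 1 * x + 0" by simp
    then show ?thesis unfolding J_def using M_zero by blast
  qed
  ultimately have "J = UNIV" using max assms unfolding maximal_ideal_def by blast
  then obtain r m where rm: "1 = r * x + m" "m \<in> M" unfolding J_def by blast
  obtain t where t: "m = t * g" using rm(2) unfolding pideal_def by auto
  have "m ^ s = 0" using t nil by (simp add: power_mult_distrib)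
  then have "(1 - m) * (\<Sum>i<s. m ^ i) = 1" by (metis one_diff_power_eq diff_zero)
  moreover have "1 - m = r * x" using rm by (simp add: algebra_simps)
  ultimately have "x * (r * (\<Sum>i<s. m ^ i)) = 1" by (simp add: algebra_simps)
  then show ?thesis by blast
qed

lemma unit_mult_notin: "u \<notin> M \<Longrightarrow> x \<notin> M \<Longrightarrow> u * x \<notin> M"
proof
  assume "u \<notin> M" "x \<notin> M" "u * x \<in> M"
  obtain v where "u * v = 1" using unit \<open>u \<notin> M\<close> by blast
  then have "v * (u * x) = x" by (metis mult.assoc mult.commute mult_1)
  then show False using M_mult[OF \<open>u * x \<in> M\<close>, of v] \<open>x \<notin> M\<close> by simp
qed

lemma unit_cancel: "u \<notin> M \<Longrightarrow> u * x = 0 \<Longrightarrow> x = 0"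
  by (metis unit mult.assoc mult.commute mult_1 mult_zero_right)

lemma decomp_aux: "y * g ^ t \<noteq> 0 \<Longrightarrow> \<exists>u t'. u \<notin> M \<and> t' < s \<and> y * g ^ t = u * g ^ t'"
proof (induction "s - t" arbitrary: y t rule: less_induct)
  case less
  have ts: "t < s"
  proof (rule ccontr)
    assume "\<not> t < s" then have "g ^ t = 0" using nil by (metis le_add_diff_inverse not_less power_add mult_zero_left)
    then show False using less.prems by simp
  qed
  show ?case
  proof (cases "y \<in> M")
    case False then show ?thesis using ts by blast
  next
    case True
    then obtain y' where "y = y' * g" unfolding pideal_def by auto
    then have e: "y * g ^ t = y' * g ^ Suc t" by (simp add: algebra_simps)
    have "\<exists>u t'. u \<notin> M \<and> t' < s \<and> y' * g ^ Suc t = u * g ^ t'"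
      using less.hyps[of "Suc t" y'] ts less.prems e by auto
    then show ?thesis using e by simp
  qed
qed

lemma decomp: "x \<noteq> 0 \<Longrightarrow> \<exists>u t. u \<notin> M \<and> t < s \<and> x = u * g ^ t"
  using decomp_aux[of x 0] by simp

lemma ann_g: "g * y = 0 \<Longrightarrow> y \<in> pideal (g ^ (s - 1))"
proof (cases "y = 0")
  case True then show ?thesis unfolding pideal_def by (auto intro: range_eqI[of _ _ 0])
next
  case False
  assume gy: "g * y = 0"
  obtain u t where ut: "u \<notin> M" "t < s" "y = u * g ^ t" using decomp False by blast
  have "u * g ^ Suc t = 0" using gy ut by (simp add: algebra_simps)
  then have "g ^ Suc t = 0" using unit_cancel ut by blast
  then have "Suc t \<ge> s" using nil_min by (meson not_less)
  then have "t = s - 1" using ut by simp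
  then show ?thesis using ut unfolding pideal_def by auto
qed

lemma gpow: "g * g ^ (s - 1) = g ^ s"
  using s_pos by (metis Suc_diff_le diff_Suc_1 power_Suc)

lemma ann_g2: "y \<in> pideal (g ^ (s - 1)) \<Longrightarrow> g * y = 0"
proof -
  assume "y \<in> pideal (g ^ (s - 1))"
  then obtain r where "y = r * g ^ (s - 1)" unfolding pideal_iff by blast
  then have "g * y = r * (g * g ^ (s - 1))" by (simp add: algebra_simps)
  then show ?thesis using gpow nil by simp
qed

lemma ideal_contains_bot: assumes "is_ideal I" "I \<noteq> {0}" shows "pideal (g ^ (s - 1)) \<subseteq> I"
proof -
  obtain x where x: "x \<in> I" "x \<noteq> 0" using assms is_ideal_def by auto
  obtain u t where ut: "u \<notin> M" "t < s" "x = u * g ^ t" using decomp x by blast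
  obtain v where v: "u * v = 1" using unit ut by blast
  have "g ^ (s - 1) = g ^ (s - 1 - t) * g ^ t" using ut(2) by (simp add: power_add[symmetric])
  also have "\<dots> = (u * v) * (g ^ (s - 1 - t) * g ^ t)" using v by simp
  also have "\<dots> = (v * g ^ (s - 1 - t)) * x" using ut(3) by (simp add: ac_simps)
  finally have "g ^ (s - 1) \<in> I" using assms(1) x unfolding is_ideal_def by metis
  then show ?thesis using assms(1) unfolding is_ideal_def pideal_def by auto
qed

end

context cr begin

lemma q_ge2: "q \<ge> 2"
proof -
  obtain i where i: "i < q" "1 - T ! i \<in> M" using reps unfolding coset_reps_def by blast
  have "i \<noteq> 0"
  proof
    assume "i = 0"
    with i T0 have "1 \<in> M" by simp
    with one_notin_M show False by simp
  qed
  then show ?thesis using i by simp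
qed

lemma q_pos[simp]: "q > 0" using q_ge2 by linarith
lemma T_ne[simp]: "T \<noteq> []" using q_pos by blast

lemma card_UNIV_M: "card (UNIV :: 'a set) = q * card M"
proof -
  have "bij_betw (\<lambda>(i, m). T ! i + m) ({..<q} \<times> M) UNIV"
  proof (rule bij_betwI')
    fix a b assume ab: "a \<in> {..<q} \<times> M" "b \<in> {..<q} \<times> M"
    obtain i m j m' where ij: "a = (i, m)" "b = (j, m')" by (cases a, cases b) auto
    show "((case a of (i, m) \<Rightarrow> T ! i + m) = (case b of (i, m) \<Rightarrow> T ! i + m)) = (a = b)"
    proof
      assume e: "(case a of (i, m) \<Rightarrow> T ! i + m) = (case b of (i, m) \<Rightarrow> T ! i + m)"
      define x where "x = T ! i + m"
      have "x - T ! i = m" by (simp add: x_def)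
      moreover have "x - T ! j = m'" using e ij by (simp add: x_def)
      ultimately have "x - T ! i \<in> M" "x - T ! j \<in> M" using ab ij by auto
      moreover have "i < q" "j < q" using ab ij by auto
      ultimately have "i = j" using reps unfolding coset_reps_def by blast
      then show "a = b" using e ij by simp
    qed simp
  next
    fix a :: 'a show "a \<in> UNIV" by simp
  next
    fix x :: 'a
    obtain i where i: "i < q" "x - T ! i \<in> M" using reps unfolding coset_reps_def by blast
    then have "(i, x - T ! i) \<in> {..<q} \<times> M" "x = (case (i, x - T ! i) of (i, m) \<Rightarrow> T ! i + m)" by auto
    then show "\<exists>a\<in>{..<q} \<times> M. x = (case a of (i, m) \<Rightarrow> T ! i + m)" by blast
  qed
  then have "card (UNIV :: 'a set) = card ({..<q} \<times> M)" by (simp add: bij_betw_same_card)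
  then show ?thesis by (simp add: card_cartesian_product)
qed

lemma M_card_pos: "card M > 0"
  using M_zero by (auto simp: card_gt_0_iff)

lemma card_bot: "card (pideal (g ^ (s - 1))) = q"
proof -
  have "card (UNIV :: 'a set) = card ((\<lambda>r. r * g ^ (s - 1)) ` UNIV) * card {x\<in>UNIV. x * g ^ (s - 1) = 0}"
    by (rule kernel_card[where p = "(+)" and m = "(-)"]) (auto simp: algebra_simps)
  moreover have "(\<lambda>r. r * g ^ (s - 1)) ` UNIV = pideal (g ^ (s - 1))" unfolding pideal_def by simp
  moreover have "{x\<in>UNIV. x * g ^ (s - 1) = 0} = M"
  proof (intro set_eqI iffI)
    fix x assume "x \<in> {x\<in>UNIV. x * g ^ (s - 1) = 0}"
    then have x: "x * g ^ (s - 1) = 0" by simp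
    show "x \<in> M"
    proof (rule ccontr)
      assume "x \<notin> M"
      then have "g ^ (s - 1) = 0" using unit_cancel x by blast
      then show False using nil_min s_pos by auto
    qed
  next
    fix x assume "x \<in> M"
    then obtain r where "x = r * g" unfolding pideal_iff by blast
    then have "x * g ^ (s - 1) = r * (g * g ^ (s - 1))" by (simp add: ac_simps)
    then show "x \<in> {x\<in>UNIV. x * g ^ (s - 1) = 0}" using gpow nil by simp
  qed
  ultimately have "q * card M = card (pideal (g ^ (s - 1))) * card M" using card_UNIV_M by simp
  then show ?thesis using M_card_pos by auto
qed

lemma ideal_card:
  assumes I: "is_ideal I" "I \<noteq> {0}"
  shows "card I = q * card ((\<lambda>x. g * x) ` I)"
proof -
  have cl: "x + y \<in> I" "x - y \<in> I" if "x \<in> I" "y \<in> I" for x y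
  proof -
    show "x + y \<in> I" using I that unfolding is_ideal_def by blast
    have "(-1) * y \<in> I" using I that unfolding is_ideal_def by blast
    then have "x + (-1) * y \<in> I" using I that unfolding is_ideal_def by blast
    then show "x - y \<in> I" by simp
  qed
  have "card I = card ((\<lambda>x. g * x) ` I) * card {x\<in>I. g * x = 0}"
    by (rule kernel_card[where p = "(+)" and m = "(-)"]) (auto simp: algebra_simps cl)
  moreover have "{x\<in>I. g * x = 0} = pideal (g ^ (s - 1))"
    using ideal_contains_bot[OF I] ann_g ann_g2 by blast
  ultimately show ?thesis using card_bot by simp
qed

lemma card_pow: "t \<le> s \<Longrightarrow> card (pideal (g ^ (s - t))) = q ^ t"
proof (induction t)
  case 0
  have "pideal (g ^ s) = {0}" using nil unfolding pideal_def by auto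
  then show ?case by simp
next
  case (Suc t)
  define I where "I = pideal (g ^ (s - Suc t))"
  have ne: "g ^ (s - Suc t) \<noteq> 0" using nil_min Suc.prems by simp
  have "g ^ (s - Suc t) \<in> I" unfolding I_def pideal_iff by (rule exI[of _ 1]) simp
  then have I0: "I \<noteq> {0}" using ne by auto
  have st: "s - t = Suc (s - Suc t)" using Suc.prems by simp
  have "(\<lambda>x. g * x) ` I = pideal (g ^ (s - t))"
  proof (intro set_eqI iffI)
    fix y assume "y \<in> (\<lambda>x. g * x) ` I"
    then obtain z where "z \<in> I" "y = g * z" by blast
    then obtain r where "y = g * (r * g ^ (s - Suc t))" unfolding I_def pideal_iff by blast
    then have "y = r * g ^ (s - t)" using st by (simp add: ac_simps)
    then show "y \<in> pideal (g ^ (s - t))" unfolding pideal_iff by blast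
  next
    fix y assume "y \<in> pideal (g ^ (s - t))"
    then obtain r where "y = r * g ^ (s - t)" unfolding pideal_iff by blast
    then have "y = g * (r * g ^ (s - Suc t))" using st by (simp add: ac_simps)
    moreover have "r * g ^ (s - Suc t) \<in> I" unfolding I_def pideal_iff by blast
    ultimately show "y \<in> (\<lambda>x. g * x) ` I" by blast
  qed
  moreover have "card I = q * card ((\<lambda>x. g * x) ` I)"
    by (rule ideal_card) (use I0 pideal_ideal I_def in auto)
  ultimately have "card I = q * card (pideal (g ^ (s - t)))" by simp
  then show ?case using Suc I_def by simp
qed

lemma card_UNIV: "card (UNIV :: 'a set) = q ^ s"
proof -
  have "pideal (1::'a) = UNIV" unfolding pideal_def by auto
  then show ?thesis using card_pow[of s] by simp
qed

lemma card_M: "card M = q ^ (s - 1)"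
proof -
  have "q * card M = q * q ^ (s - 1)" using card_UNIV card_UNIV_M s_pos
    by (metis Suc_diff_le diff_Suc_1 power_Suc)
  then show ?thesis using q_ge2 by (cases "T = []") auto
qed

lemma rho_Suc: "rho g (Suc m) T j = rho g m T j + T ! ((j div q ^ m) mod q) * g ^ m"
  unfolding rho_def by simp

lemma digit_shift:
  assumes "i < m"
  shows "((j + i0 * q ^ m) div q ^ i) mod q = (j div q ^ i) mod q"
proof -
  have qm: "q ^ m = q ^ i * (q * q ^ (m - Suc i))" using assms
    by (metis Suc_diff_Suc le_add_diff_inverse less_imp_le power_Suc power_add)
  have "q > 0" using q_ge2 by simp
  then have qi: "q ^ i > 0" by simp
  have A: "j + i0 * q ^ m = j + (q * (i0 * q ^ (m - Suc i))) * q ^ i" unfolding qm by (simp add: ac_simps)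
  have B: "(j + (q * (i0 * q ^ (m - Suc i))) * q ^ i) div q ^ i = q * (i0 * q ^ (m - Suc i)) + j div q ^ i"
    by (rule div_mult_self1) (use qi in simp)
  have "(j + i0 * q ^ m) div q ^ i = q * (i0 * q ^ (m - Suc i)) + j div q ^ i"
    by (simp only: A B)
  then have "(j + i0 * q ^ m) div q ^ i = j div q ^ i + q * (i0 * q ^ (m - Suc i))"
    by (simp only: add.commute)
  then show ?thesis by simp
qed

lemma rho_shift:
  assumes "i0 < q" "j < q ^ m"
  shows "rho g (Suc m) T (j + i0 * q ^ m) = rho g m T j + T ! i0 * g ^ m"
proof -
  have "rho g m T (j + i0 * q ^ m) = rho g m T j"
    unfolding rho_def using digit_shift by (intro sum.cong) auto
  moreover have "((j + i0 * q ^ m) div q ^ m) mod q = i0"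
  proof -
    have "q ^ m > 0" by simp
    then have "(j + i0 * q ^ m) div q ^ m = j div q ^ m + i0" by simp
    also have "\<dots> = i0" using assms(2) by simp
    finally show ?thesis using assms(1) by simp
  qed
  ultimately show ?thesis using rho_Suc by simp
qed

lemma rho_surj_aux: "m \<le> s \<Longrightarrow> \<exists>j<q ^ m. \<exists>y. x = rho g m T j + g ^ m * y"
proof (induction m)
  case 0
  have "x = rho g 0 T 0 + g ^ 0 * x" unfolding rho_def by simp
  then show ?case by force
next
  case (Suc m)
  then obtain j y where jy: "j < q ^ m" "x = rho g m T j + g ^ m * y" by auto
  obtain i0 where i0: "i0 < q" "y - T ! i0 \<in> M" using reps unfolding coset_reps_def by blast
  obtain y' where y': "y - T ! i0 = y' * g" using i0 unfolding pideal_iff by blast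
  have "j + i0 * q ^ m < q ^ Suc m"
  proof -
    have "i0 \<le> q - 1" using i0(1) by linarith
    then have "i0 * q ^ m \<le> (q - 1) * q ^ m" by (rule mult_le_mono1)
    then have "j + i0 * q ^ m < q ^ m + (q - 1) * q ^ m" using jy(1) by linarith
    also have "\<dots> = q ^ Suc m" using q_ge2
      by (metis Suc_diff_1 mult_Suc not_numeral_le_zero not_gr0 power_Suc)
    finally show ?thesis .
  qed
  moreover have "x = rho g (Suc m) T (j + i0 * q ^ m) + g ^ Suc m * y'"
  proof -
    have "y = T ! i0 + y' * g" using y' by (simp add: algebra_simps)
    then have "x = rho g m T j + T ! i0 * g ^ m + g ^ Suc m * y'"
      using jy by (simp add: algebra_simps)
    then show ?thesis using rho_shift[OF i0(1) jy(1)] by simp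
  qed
  ultimately show ?case by blast
qed

lemma rho_image: "rho g s T ` {..<q ^ s} = UNIV"
proof -
  have "x \<in> rho g s T ` {..<q ^ s}" for x
    using rho_surj_aux[of s x] nil by auto
  then show ?thesis by auto
qed

lemma rho_inj: "inj_on (rho g s T) {..<q ^ s}"
  by (rule eq_card_imp_inj_on) (simp_all add: rho_image card_UNIV)

abbreviation "L \<equiv> map (rho g s T) [0..<q ^ s]"

lemma L_distinct: "distinct L"
  using rho_inj by (simp add: distinct_map lessThan_atLeast0)

lemma L_set: "set L = UNIV"
  using rho_image by (simp add: lessThan_atLeast0)

lemma gl_distinct: "distinct (gamma_list g s T)"
  unfolding gamma_list_def using L_distinct by simp

lemma gl_set: "set (gamma_list g s T) = M"
  unfolding gamma_list_def using L_set by simp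

lemma gl_length: "length (gamma_list g s T) = q ^ (s - 1)"
  using distinct_card[OF gl_distinct] gl_set card_M by simp

end


definition col :: "'b list list \<Rightarrow> nat \<Rightarrow> 'b list" where
  "col G j = map (\<lambda>row. row ! j) G"

definition cols :: "'b list list \<Rightarrow> 'b list list" where
  "cols G = map (col G) [0..<ncols G]"

definition wfm :: "nat \<Rightarrow> 'b list list \<Rightarrow> bool" where
  "wfm r G \<longleftrightarrow> length G = r \<and> 0 < r \<and> (\<forall>row\<in>set G. length row = ncols G)"

definition hc :: "nat \<Rightarrow> 'b list list list \<Rightarrow> 'b list list" where
  "hc r Ms = map (\<lambda>i. concat (map (\<lambda>M. M ! i) Ms)) [0..<r]"

lemma length_cols[simp]: "length (cols G) = ncols G"
  unfolding cols_def by simp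

lemma hc_cols:
  assumes "\<forall>M\<in>set Ms. wfm r M"
  shows "map (col (hc r Ms)) [0..<sum_list (map ncols Ms)] = concat (map cols Ms)"
  using assms
proof (induction Ms)
  case Nil
  then show ?case by simp
next
  case (Cons M Ms)
  define a where "a = ncols M"
  define b where "b = sum_list (map ncols Ms)"
  have wM: "wfm r M" using Cons.prems by simp
  have lenM: "\<And>i. i < r \<Longrightarrow> length (M ! i) = a"
    using wM unfolding wfm_def a_def by auto
  have hcM: "hc r (M # Ms) = map (\<lambda>i. M ! i @ hc r Ms ! i) [0..<r]"
    unfolding hc_def by simp
  have upt: "[0..<a + b] = [0..<a] @ map (\<lambda>j. a + j) [0..<b]"
  proof -
    have "map (\<lambda>j. a + j) [0..<b] = [a..<a + b]" by (induction b) auto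
    then show ?thesis using upt_add_eq_append[of 0 a b] by simp
  qed
  have p1: "map (col (hc r (M # Ms))) [0..<a] = cols M"
  proof -
    have "col (hc r (M # Ms)) j = col M j" if "j < a" for j
    proof -
      have "col (hc r (M # Ms)) j = map (\<lambda>i. (M ! i @ hc r Ms ! i) ! j) [0..<r]"
        unfolding col_def hcM by simp
      also have "\<dots> = map (\<lambda>i. M ! i ! j) [0..<r]"
        using lenM that by (intro map_cong) (auto simp: nth_append)
      also have "\<dots> = col M j" unfolding col_def using wM unfolding wfm_def
        by (simp add: list_eq_iff_nth_eq)
      finally show ?thesis .
    qed
    then show ?thesis unfolding cols_def a_def by simp
  qed
  have p2: "map (col (hc r (M # Ms))) (map (\<lambda>j. a + j) [0..<b]) = map (col (hc r Ms)) [0..<b]"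
  proof -
    have "col (hc r (M # Ms)) (a + j) = col (hc r Ms) j" for j
    proof -
      have "col (hc r (M # Ms)) (a + j) = map (\<lambda>i. (M ! i @ hc r Ms ! i) ! (a + j)) [0..<r]"
        unfolding col_def hcM by simp
      also have "\<dots> = map (\<lambda>i. hc r Ms ! i ! j) [0..<r]"
        using lenM by (intro map_cong) (auto simp: nth_append)
      also have "\<dots> = col (hc r Ms) j" unfolding col_def hc_def by simp
      finally show ?thesis .
    qed
    then show ?thesis by simp
  qed
  have "map (col (hc r (M # Ms))) [0..<a + b] = map (col (hc r (M # Ms))) [0..<a] @ map (col (hc r (M # Ms))) (map (\<lambda>j. a + j) [0..<b])"
    by (simp only: upt map_append)
  also have "\<dots> = cols M @ concat (map cols Ms)" using p1 p2 Cons.IH Cons.prems b_def by simp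
  finally show ?case unfolding a_def b_def by simp
qed

lemma hcat_props:
  assumes ne: "Ms \<noteq> []" and w: "\<forall>M\<in>set Ms. wfm r M"
  shows "wfm r (hcat Ms)" "cols (hcat Ms) = concat (map cols Ms)"
    "ncols (hcat Ms) = sum_list (map ncols Ms)"
proof -
  have "hd Ms \<in> set Ms" using ne by simp
  then have r: "length (hd Ms) = r" "r > 0" using w unfolding wfm_def by auto
  have H: "hcat Ms = hc r Ms" unfolding hcat_def hc_def r(1) ..
  have rowlen: "length (hc r Ms ! i) = sum_list (map ncols Ms)" if "i < r" for i
  proof -
    have "length (hc r Ms ! i) = sum_list (map (\<lambda>M. length (M ! i)) Ms)"
      using that unfolding hc_def by (simp add: length_concat comp_def)
    also have "\<dots> = sum_list (map ncols Ms)"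
      using w that unfolding wfm_def by (intro arg_cong[where f = sum_list] map_cong) auto
    finally show ?thesis .
  qed
  have "ncols (hc r Ms) = length (hc r Ms ! 0)"
    unfolding ncols_def using r by (simp add: hc_def hd_conv_nth)
  then show nc: "ncols (hcat Ms) = sum_list (map ncols Ms)"
    unfolding H using rowlen[of 0] r by simp
  show "wfm r (hcat Ms)"
    unfolding wfm_def using nc rowlen r unfolding H by (auto simp: hc_def)
  have "cols (hcat Ms) = map (col (hcat Ms)) [0..<ncols (hcat Ms)]" by (rule cols_def)
  then show "cols (hcat Ms) = concat (map cols Ms)"
    unfolding nc using hc_cols[OF w] H by simp
qed

lemma cons_props:
  assumes w: "wfm r G" and lr: "length row = ncols G"
  shows "wfm (Suc r) (row # G)" "ncols (row # G) = ncols G"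
    "cols (row # G) = map (\<lambda>j. row ! j # col G j) [0..<ncols G]"
proof -
  show "ncols (row # G) = ncols G" using lr unfolding ncols_def by simp
  then show "wfm (Suc r) (row # G)" using w lr unfolding wfm_def by auto
  show "cols (row # G) = map (\<lambda>j. row ! j # col G j) [0..<ncols G]"
    unfolding cols_def col_def using \<open>ncols (row # G) = ncols G\<close> by simp
qed

lemma cons_rep_cols:
  assumes w: "wfm r G"
  shows "wfm (Suc r) (replicate (ncols G) a # G)" "ncols (replicate (ncols G) a # G) = ncols G"
    "cols (replicate (ncols G) a # G) = map ((#) a) (cols G)"
  using cons_props[OF w, of "replicate (ncols G) a"] by (simp_all add: cols_def)

lemma concat_map_cons_product:
  "concat (map (\<lambda>x. map ((#) x) ys) xs) = map (\<lambda>(x, v). x # v) (List.product xs ys)"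
  by (induction xs) auto

lemma distinct_cons_product:
  "distinct xs \<Longrightarrow> distinct ys \<Longrightarrow> distinct (concat (map (\<lambda>x. map ((#) x) ys) xs))"
  unfolding concat_map_cons_product
  by (simp add: distinct_map distinct_product inj_on_def)

lemma set_cons_product:
  "set (concat (map (\<lambda>x. map ((#) x) ys) xs)) = (\<lambda>(x, v). x # v) ` (set xs \<times> set ys)"
  unfolding concat_map_cons_product by simp


lemma cols_single: "cols [xs] = map (\<lambda>x. [x]) xs"
proof -
  have "cols [xs] = map (\<lambda>j. [xs ! j]) [0..<length xs]"
    unfolding cols_def col_def ncols_def by simp
  also have "\<dots> = map (\<lambda>x. [x]) (map (nth xs) [0..<length xs])" by simp
  finally show ?thesis by (simp only: map_nth)
qed

context cr begin

definition Ld where "Ld = L"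
lemma Ld_distinct: "distinct Ld" unfolding Ld_def by (rule L_distinct)
lemma Ld_set: "set Ld = UNIV" unfolding Ld_def by (rule L_set)
lemma Ld_ne: "Ld \<noteq> []" using Ld_set by auto
lemma Galpha_one: "Galpha g s T (Suc 0) = [Ld]" unfolding Ld_def by simp
lemma Galpha_SS: "Galpha g s T (Suc (Suc k)) = hcat (map (\<lambda>x. replicate (q ^ (s * Suc k)) x # Galpha g s T (Suc k)) Ld)"
  unfolding Ld_def by (simp only: Galpha.simps map_map comp_def)

definition S :: "nat \<Rightarrow> 'a list set" where
  "S k = {v. length v = k \<and> (\<exists>j<k. v ! j = 1 \<and> (\<forall>i<j. v ! i \<in> M))}"

lemma S_one: "S (Suc 0) = {[1]}"
  unfolding S_def by (auto simp: length_Suc_conv)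

lemma S_Suc: "S (Suc k) = (\<lambda>x. 1 # x) ` {v. length v = k} \<union> (\<lambda>(a, v). a # v) ` (M \<times> S k)"
proof (intro set_eqI iffI)
  fix v assume "v \<in> S (Suc k)"
  then obtain a w j where v: "v = a # w" "length w = k" "j < Suc k" "v ! j = 1" "\<forall>i<j. v ! i \<in> M"
    unfolding S_def by (auto simp: length_Suc_conv)
  show "v \<in> (\<lambda>x. 1 # x) ` {v. length v = k} \<union> (\<lambda>(a, v). a # v) ` (M \<times> S k)"
  proof (cases j)
    case 0
    then show ?thesis using v by auto
  next
    case (Suc j')
    have "a \<in> M" using v Suc by force
    moreover have "w \<in> S k" unfolding S_def
    proof (intro CollectI conjI exI[of _ j'])
      show "length w = k" "j' < k" "w ! j' = 1" using v Suc by auto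
      show "\<forall>i<j'. w ! i \<in> M" using v Suc by force
    qed
    ultimately show ?thesis using v by blast
  qed
next
  fix v assume "v \<in> (\<lambda>x. 1 # x) ` {v. length v = k} \<union> (\<lambda>(a, v). a # v) ` (M \<times> S k)"
  then show "v \<in> S (Suc k)"
  proof
    assume "v \<in> (\<lambda>x. 1 # x) ` {v. length v = k}"
    then obtain x where "v = 1 # x" "length x = k" by blast
    then show ?thesis unfolding S_def by (intro CollectI conjI exI[of _ 0]) auto
  next
    assume "v \<in> (\<lambda>(a, v). a # v) ` (M \<times> S k)"
    then obtain a w j where w: "v = a # w" "a \<in> M" "length w = k" "j < k" "w ! j = 1" "\<forall>i<j. w ! i \<in> M"
      unfolding S_def by auto
    have "\<forall>i<Suc j. v ! i \<in> M"
    proof (intro allI impI)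
      fix i assume "i < Suc j" then show "v ! i \<in> M" using w by (cases i) auto
    qed
    then show ?thesis unfolding S_def using w by (intro CollectI conjI exI[of _ "Suc j"]) auto
  qed
qed

lemma card_vecs: "card {v :: 'a list. length v = n} = q ^ (s * n)"
proof -
  have "card {v :: 'a list. set v \<subseteq> UNIV \<and> length v = n} = card (UNIV :: 'a set) ^ n"
    by (rule card_lists_length_eq) simp
  then show ?thesis using card_UNIV by (simp add: power_mult)
qed

lemma Galpha_props:
  "wfm (Suc k) (Galpha g s T (Suc k)) \<and> distinct (cols (Galpha g s T (Suc k)))
   \<and> set (cols (Galpha g s T (Suc k))) = {v. length v = Suc k}"
proof (induction k)
  case 0
  have c: "cols [Ld] = map (\<lambda>x. [x]) Ld" by (rule cols_single)
  have "wfm (Suc 0) [Ld]" unfolding wfm_def ncols_def by simp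
  moreover have "distinct (map (\<lambda>x. [x]) Ld)" using Ld_distinct by (simp add: distinct_map inj_on_def)
  moreover have "set (map (\<lambda>x. [x]) Ld) = {v. length v = Suc 0}"
    using Ld_set by (auto simp: length_Suc_conv)
  ultimately show ?case using c Galpha_one by simp
next
  case (Suc k)
  define G where "G = Galpha g s T (Suc k)"
  have wG: "wfm (Suc k) G" and dG: "distinct (cols G)" and sG: "set (cols G) = {v. length v = Suc k}"
    using Suc unfolding G_def by auto
  have nG: "ncols G = q ^ (s * Suc k)"
    using distinct_card[OF dG] sG card_vecs[of "Suc k"] by simp
  define Ms where "Ms = map (\<lambda>x. replicate (ncols G) x # G) Ld"
  have eq: "Galpha g s T (Suc (Suc k)) = hcat Ms"
    unfolding Ms_def Galpha_SS nG[unfolded G_def] G_def ..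
  have ne: "Ms \<noteq> []" unfolding Ms_def using Ld_ne by simp
  have w: "\<forall>M\<in>set Ms. wfm (Suc (Suc k)) M" unfolding Ms_def using cons_rep_cols(1)[OF wG] by auto
  have c: "cols (hcat Ms) = concat (map (\<lambda>x. map ((#) x) (cols G)) Ld)"
    using hcat_props(2)[OF ne w] unfolding Ms_def by (simp add: comp_def cons_rep_cols(3)[OF wG])
  have "set (concat (map (\<lambda>x. map ((#) x) (cols G)) Ld)) = {v. length v = Suc (Suc k)}"
    unfolding set_cons_product sG Ld_set by (auto simp: length_Suc_conv)
  then show ?case
    using hcat_props(1)[OF ne w] c eq distinct_cons_product[OF Ld_distinct dG] by simp
qed

lemma ncols_Galpha: "ncols (Galpha g s T (Suc k)) = q ^ (s * Suc k)"
  using Galpha_props[of k] distinct_card card_vecs[of "Suc k"] by (metis length_cols)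

lemma Gbeta_props:
  "wfm (Suc k) (Gbeta g s T (Suc k)) \<and> distinct (cols (Gbeta g s T (Suc k)))
   \<and> set (cols (Gbeta g s T (Suc k))) = S (Suc k)"
proof (induction k)
  case 0
  have c: "cols [[1::'a]] = [[1]]"
    unfolding cols_def col_def ncols_def by simp
  have "wfm (Suc 0) [[1::'a]]" unfolding wfm_def ncols_def by simp
  then show ?case using c S_one by simp
next
  case (Suc k)
  define G where "G = Gbeta g s T (Suc k)"
  define A where "A = Galpha g s T (Suc k)"
  have wG: "wfm (Suc k) G" and dG: "distinct (cols G)" and sG: "set (cols G) = S (Suc k)"
    using Suc unfolding G_def by auto
  have wA: "wfm (Suc k) A" and dA: "distinct (cols A)" and sA: "set (cols A) = {v. length v = Suc k}"
    using Galpha_props[of k] unfolding A_def by auto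
  have nA: "ncols A = q ^ (s * Suc k)" unfolding A_def by (rule ncols_Galpha)
  define Ms where "Ms = (replicate (ncols A) 1 # A) # map (\<lambda>x. replicate (ncols G) x # G) (gamma_list g s T)"
  have eq: "Gbeta g s T (Suc (Suc k)) = hcat Ms"
    unfolding Ms_def G_def A_def by (simp add: nA[unfolded A_def])
  have ne: "Ms \<noteq> []" unfolding Ms_def by simp
  have w: "\<forall>M\<in>set Ms. wfm (Suc (Suc k)) M" unfolding Ms_def
    using cons_rep_cols(1)[OF wG] cons_rep_cols(1)[OF wA] by auto
  have c: "cols (hcat Ms) = map ((#) 1) (cols A) @ concat (map (\<lambda>x. map ((#) x) (cols G)) (gamma_list g s T))"
    using hcat_props(2)[OF ne w] unfolding Ms_def
    by (simp add: comp_def cons_rep_cols(3)[OF wG] cons_rep_cols(3)[OF wA])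
  have s2: "set (concat (map (\<lambda>x. map ((#) x) (cols G)) (gamma_list g s T))) = (\<lambda>(a, v). a # v) ` (M \<times> S (Suc k))"
    unfolding set_cons_product sG gl_set ..
  have s1: "set (map ((#) 1) (cols A)) = (\<lambda>x. 1 # x) ` {v. length v = Suc k}" using sA by simp
  have d1: "distinct (map ((#) (1::'a)) (cols A))" using dA by (simp add: distinct_map)
  have d2: "distinct (concat (map (\<lambda>x. map ((#) x) (cols G)) (gamma_list g s T)))"
    by (rule distinct_cons_product[OF gl_distinct dG])
  have disj: "set (map ((#) 1) (cols A)) \<inter> set (concat (map (\<lambda>x. map ((#) x) (cols G)) (gamma_list g s T))) = {}"
    unfolding s1 s2 using one_notin_M by auto
  show ?case
    using hcat_props(1)[OF ne w] c eq d1 d2 disj s1 s2 S_Suc[of "Suc k"] by simp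
qed

lemma ncols_Gbeta_Suc:
  "ncols (Gbeta g s T (Suc (Suc k))) = q ^ (s * Suc k) + q ^ (s - 1) * ncols (Gbeta g s T (Suc k))"
proof -
  define G where "G = Gbeta g s T (Suc k)"
  define A where "A = Galpha g s T (Suc k)"
  have wG: "wfm (Suc k) G" using Gbeta_props[of k] unfolding G_def by auto
  have wA: "wfm (Suc k) A" using Galpha_props[of k] unfolding A_def by auto
  have nA: "ncols A = q ^ (s * Suc k)" unfolding A_def by (rule ncols_Galpha)
  define Ms where "Ms = (replicate (ncols A) 1 # A) # map (\<lambda>x. replicate (ncols G) x # G) (gamma_list g s T)"
  have eq: "Gbeta g s T (Suc (Suc k)) = hcat Ms"
    unfolding Ms_def G_def A_def by (simp add: nA[unfolded A_def])
  have ne: "Ms \<noteq> []" unfolding Ms_def by simp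
  have w: "\<forall>M\<in>set Ms. wfm (Suc (Suc k)) M" unfolding Ms_def
    using cons_rep_cols(1)[OF wG] cons_rep_cols(1)[OF wA] by auto
  have "ncols (hcat Ms) = ncols A + length (gamma_list g s T) * ncols G"
    using hcat_props(3)[OF ne w] unfolding Ms_def
    by (simp add: comp_def cons_rep_cols(2)[OF wG] cons_rep_cols(2)[OF wA] sum_list_triv)
  then show ?thesis using eq nA gl_length G_def by simp
qed

lemma ncols_Gbeta_formula: "ncols (Gbeta g s T (Suc k)) = (\<Sum>i<Suc k. q ^ (s * k - i))"
proof (induction k)
  case 0
  then show ?case by (simp add: ncols_def)
next
  case (Suc k)
  have "(\<Sum>i<Suc (Suc k). q ^ (s * Suc k - i)) = q ^ (s * Suc k) + (\<Sum>i<Suc k. q ^ (s * Suc k - Suc i))"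
    by (subst sum.lessThan_Suc_shift) simp
  also have "(\<Sum>i<Suc k. q ^ (s * Suc k - Suc i)) = (\<Sum>i<Suc k. q ^ (s - 1) * q ^ (s * k - i))"
  proof (intro sum.cong refl)
    fix i assume "i \<in> {..<Suc k}"
    then have "i \<le> k" by simp
    moreover have "k \<le> s * k" using s_pos by simp
    moreover have "s * Suc k = s * k + s" by simp
    ultimately have "s * k - i + (s - 1) = s * Suc k - Suc i"
      using s_pos by linarith
    then show "q ^ (s * Suc k - Suc i) = q ^ (s - 1) * q ^ (s * k - i)"
      by (metis power_add mult.commute)
  qed
  also have "\<dots> = q ^ (s - 1) * ncols (Gbeta g s T (Suc k))"
    by (simp only: Suc.IH sum_distrib_left)
  finally show ?case using ncols_Gbeta_Suc by simp
qed

end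


definition dot :: "'b::comm_ring_1 list \<Rightarrow> 'b list \<Rightarrow> 'b" where
  "dot c v = (\<Sum>i<length c. c ! i * v ! i)"

lemma dot_scale: "length v = length c \<Longrightarrow> dot c (map ((*) u) v) = u * dot c v"
  unfolding dot_def by (simp add: sum_distrib_left ac_simps)

lemma dot_add: "length x = length c \<Longrightarrow> length y = length c \<Longrightarrow> dot c (map2 (+) x y) = dot c x + dot c y"
  unfolding dot_def by (simp add: sum.distrib[symmetric] distrib_left)

lemma dot_sub: "length x = length c \<Longrightarrow> length y = length c \<Longrightarrow> dot c (map2 (-) x y) = dot c x - dot c y"
  unfolding dot_def by (simp add: sum_subtractf[symmetric] right_diff_distrib)

lemma dot_sub_left: "length c' = length c \<Longrightarrow> dot c v - dot c' v = dot (map2 (-) c c') v"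
  unfolding dot_def by (simp add: sum_subtractf[symmetric] left_diff_distrib)

lemma dot_zero_left: "dot (replicate k 0) v = 0"
  unfolding dot_def by simp

lemma dot_unit: "i < length c \<Longrightarrow> dot c ((replicate (length c) 0)[i := 1]) = c ! i"
proof -
  assume i: "i < length c"
  have "dot c ((replicate (length c) 0)[i := 1]) = (\<Sum>j<length c. if j = i then c ! i else 0)"
    unfolding dot_def by (intro sum.cong refl) (auto simp: nth_list_update)
  also have "\<dots> = c ! i" using i by simp
  finally show ?thesis .
qed

lemma dot_nonzero_imp: "dot c v \<noteq> 0 \<Longrightarrow> \<exists>i<length c. c ! i \<noteq> 0"
  unfolding dot_def by (metis (no_types, lifting) lessThan_iff mult_zero_left sum.neutral)

context cr begin

lemma unit_S: "i < k \<Longrightarrow> (replicate k 0)[i := 1] \<in> S k"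
  unfolding S_def using M_zero by (intro CollectI conjI exI[of _ i]) (auto simp: nth_list_update)

lemma U_S_count:
  assumes lc: "length c = k"
  shows "card {w. length w = k \<and> \<not> (\<forall>i<k. w ! i \<in> M) \<and> dot c w \<noteq> 0}
         = card (UNIV - M) * card {v\<in>S k. dot c v \<noteq> 0}"
proof -
  define F where "F = (\<lambda>(u, v). map ((*) u) (v :: 'a list))"
  define D where "D = (UNIV - M) \<times> {v\<in>S k. dot c v \<noteq> 0}"
  define E where "E = {w. length w = k \<and> \<not> (\<forall>i<k. w ! i \<in> M) \<and> dot c w \<noteq> 0}"
  have inj: "inj_on F D"
  proof (rule inj_onI)
    fix x y assume x: "x \<in> D" and y: "y \<in> D" and e: "F x = F y"
    obtain u v u' v' where uv: "x = (u, v)" "y = (u', v')" by (cases x, cases y) auto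
    have u: "u \<notin> M" "u' \<notin> M" using x y uv unfolding D_def by auto
    obtain j where j: "length v = k" "j < k" "v ! j = 1" "\<forall>i<j. v ! i \<in> M"
      using x uv unfolding D_def S_def by auto
    obtain j' where j': "length v' = k" "j' < k" "v' ! j' = 1" "\<forall>i<j'. v' ! i \<in> M"
      using y uv unfolding D_def S_def by auto
    have e': "map ((*) u) v = map ((*) u') v'" using e uv unfolding F_def by simp
    have ev: "u * v ! i = u' * v' ! i" if "i < k" for i
      using arg_cong[OF e', of "\<lambda>l. l ! i"] that j j' by simp
    have jj: "j = j'"
    proof (rule ccontr)
      assume "j \<noteq> j'"
      then consider "j < j'" | "j' < j" by linarith
      then show False
      proof cases
        case 1
        then have "u' * v' ! j \<in> M" using j' M_mult by blast
        then show False using ev[of j] j u by simp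
      next
        case 2
        then have "u * v ! j' \<in> M" using j M_mult by blast
        then show False using ev[of j'] j' u by simp
      qed
    qed
    have uu: "u = u'" using ev[of j] j j' jj by simp
    have "v = v'"
    proof (rule nth_equalityI)
      show "length v = length v'" using j j' by simp
      fix i assume "i < length v"
      then have "u * (v ! i - v' ! i) = 0" using ev[of i] uu j by (simp add: right_diff_distrib)
      then have "v ! i - v' ! i = 0" using unit_cancel u(1) by blast
      then show "v ! i = v' ! i" by simp
    qed
    then show "x = y" using uv uu by simp
  qed
  have img: "F ` D = E"
  proof (intro set_eqI iffI)
    fix w assume "w \<in> F ` D"
    then obtain u v where uv: "(u, v) \<in> D" "w = map ((*) u) v" unfolding F_def by auto
    obtain j where j: "length v = k" "j < k" "v ! j = 1" "dot c v \<noteq> 0"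
      using uv unfolding D_def S_def by auto
    have u: "u \<notin> M" using uv unfolding D_def by auto
    have "w ! j \<notin> M" using uv j u by simp
    moreover have "dot c w \<noteq> 0" using uv(2) j lc dot_scale[of v c u] unit_cancel[OF u] by auto
    ultimately show "w \<in> E" unfolding E_def using uv j by auto
  next
    fix w assume "w \<in> E"
    then have w: "length w = k" "\<exists>i<k. w ! i \<notin> M" "dot c w \<noteq> 0" unfolding E_def by auto
    define j where "j = (LEAST i. i < k \<and> w ! i \<notin> M)"
    have j: "j < k" "w ! j \<notin> M" using LeastI_ex[OF w(2)] unfolding j_def by auto
    have jm: "w ! i \<in> M" if "i < j" for i
      using not_less_Least[of i "\<lambda>i. i < k \<and> w ! i \<notin> M"] that j unfolding j_def by auto
    obtain u' where u': "w ! j * u' = 1" using unit j by blast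
    have u'M: "u' \<notin> M" using u' one_notin_M M_mult by (metis mult.commute)
    define v where "v = map ((*) u') w"
    have "v \<in> S k" unfolding S_def v_def
    proof (intro CollectI conjI exI[of _ j])
      show "length (map ((*) u') w) = k" "j < k" using w j by auto
      show "map ((*) u') w ! j = 1" using u' j w by (simp add: mult.commute)
      show "\<forall>i<j. map ((*) u') w ! i \<in> M" using jm M_mult j w by auto
    qed
    moreover have "dot c v \<noteq> 0" using w lc dot_scale[of w c u'] unit_cancel[OF u'M] unfolding v_def by auto
    moreover have "w = map ((*) (w ! j)) v" unfolding v_def
      using u' by (simp add: list_eq_iff_nth_eq mult.assoc[symmetric])
    moreover have "w ! j \<notin> M" using j by simp
    ultimately show "w \<in> F ` D" unfolding F_def D_def by (auto intro!: image_eqI[of _ _ "(w ! j, v)"])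
  qed
  have "card E = card D" using inj img card_image by fastforce
  then show ?thesis unfolding E_def D_def by (simp add: card_cartesian_product)
qed

end


lemma arith_core:
  fixes q m W X P K ZA ZB wt :: nat
  assumes q: "q \<ge> 2" and m: "m \<ge> 1" and K: "K \<ge> 1" and X: "X = W * q * m" and XP: "q * P \<le> X"
    and XA: "X = q * K * ZA" and PB: "P = K * ZB" and ZA: "ZA \<le> X" and ZB: "ZB \<le> P"
    and PX: "P - ZB \<le> X - ZA"
    and wt: "(q * m - m) * wt = (X - ZA) - (P - ZB)"
  shows "W \<le> wt" "K = 1 \<Longrightarrow> wt = W"
proof -
  have qm: "m \<le> q * m" using q by simp
  have h1: "int wt * (int q - 1) * int m = int X - int ZA - int P + int ZB"
  proof -
    have "int ((q * m - m) * wt) = int ((X - ZA) - (P - ZB))" using wt by simp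
    then show ?thesis using qm ZA ZB PX by (simp add: of_nat_diff algebra_simps)
  qed
  have h2: "int X = int W * int q * int m" using X by simp
  have h3: "int X = int q * int K * int ZA" using XA by simp
  have h4: "int P = int K * int ZB" using PB by simp
  have id: "(int wt - int W) * ((int q - 1) * int m * int q * int K) = (int K - 1) * (int X - int q * int P)"
    using h1 h2 h3 h4 by algebra
  have pos: "(int q - 1) * int m * int q * int K > 0" using q m K by simp
  have r1: "int K - 1 \<ge> 0" using K by simp
  have "int (q * P) \<le> int X" using XP by (rule of_nat_mono)
  then have r2: "int X - int q * int P \<ge> 0" by simp
  have rhs: "(int K - 1) * (int X - int q * int P) \<ge> 0" using r1 r2 by (rule mult_nonneg_nonneg)
  have "int wt - int W \<ge> 0"
    using id pos rhs by (metis zero_le_mult_iff not_less le_less)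
  then show "W \<le> wt" by simp
  assume "K = 1"
  then have "(int wt - int W) * ((int q - 1) * int m * int q * int K) = 0" using id by simp
  then show "wt = W" using q m K by simp
qed


context cr begin

lemma finite_vecs: "finite {w :: 'a list. length w = k}"
proof -
  have "{w :: 'a list. length w = k} = {xs. set xs \<subseteq> UNIV \<and> length xs = k}" by simp
  then show ?thesis using finite_lists_length_eq[OF finite_UNIV, of k] by simp
qed

lemma card_Bvecs: "card {w. length w = k \<and> (\<forall>i<k. w ! i \<in> M)} = q ^ ((s - 1) * k)"
proof -
  have "{w. length w = k \<and> (\<forall>i<k. w ! i \<in> M)} = {xs. set xs \<subseteq> M \<and> length xs = k}"
    by (auto simp: in_set_conv_nth dest: nth_mem)
  then show ?thesis using card_lists_length_eq[of M k] card_M by (simp add: power_mult)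
qed

lemma count_main:
  assumes lc: "length c = k" and k1: "k \<ge> 1" and nz: "\<exists>i<k. c ! i \<noteq> 0"
  shows "card {v\<in>S k. dot c v \<noteq> 0} \<ge> q ^ (s * (k - 1))"
    "dot c ` {w. length w = k \<and> (\<forall>i<k. w ! i \<in> M)} = {0} \<Longrightarrow> card {v\<in>S k. dot c v \<noteq> 0} = q ^ (s * (k - 1))"
proof -
  define A where "A = {w :: 'a list. length w = k}"
  define B where "B = {w. length w = k \<and> (\<forall>i<k. w ! i \<in> M)}"
  define f where "f = dot c"
  have finA: "finite A" unfolding A_def by (rule finite_vecs)
  have BA: "B \<subseteq> A" unfolding A_def B_def by auto
  have finB: "finite B" using finA BA finite_subset by blast
  have cA: "card A = q ^ (s * k)" unfolding A_def by (rule card_vecs)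
  have cB: "card B = q ^ ((s - 1) * k)" unfolding B_def by (rule card_Bvecs)
  have len2: "length (map2 h x y) = k" if "length x = k" "length y = k" for h :: "'a \<Rightarrow> 'a \<Rightarrow> 'a" and x y
    using that by simp
  have pm: "map2 (+) (map2 (-) x y) y = x" if "length x = k" "length y = k" for x y :: "'a list"
    using that by (intro nth_equalityI) auto
  have mp: "map2 (-) (map2 (+) x y) y = x" if "length x = k" "length y = k" for x y :: "'a list"
    using that by (intro nth_equalityI) auto
  have kerA: "card A = card (f ` A) * card {w\<in>A. f w = 0}"
  proof (rule kernel_card[where p = "map2 (+)" and m = "map2 (-)"])
    show "finite A" by (rule finA)
    fix x y assume x: "x \<in> A" and y: "y \<in> A"
    show "map2 (+) x y \<in> A" using x y unfolding A_def by simp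
    show "map2 (-) x y \<in> A" using x y unfolding A_def by simp
    show "f (map2 (+) x y) = f x + f y" using x y unfolding A_def f_def by (simp add: dot_add lc)
    show "f (map2 (-) x y) = f x - f y" using x y unfolding A_def f_def by (simp add: dot_sub lc)
    show "map2 (+) (map2 (-) x y) y = x" using x y pm unfolding A_def by simp
    show "map2 (-) (map2 (+) x y) y = x" using x y mp unfolding A_def by simp
  qed
  have kerB: "card B = card (f ` B) * card {w\<in>B. f w = 0}"
  proof (rule kernel_card[where p = "map2 (+)" and m = "map2 (-)"])
    show "finite B" by (rule finB)
    fix x y assume x: "x \<in> B" and y: "y \<in> B"
    show "map2 (+) x y \<in> B" using x y M_add unfolding B_def by auto
    show "map2 (-) x y \<in> B" using x y M_minus unfolding B_def by auto
    show "f (map2 (+) x y) = f x + f y" using x y unfolding B_def f_def by (simp add: dot_add lc)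
    show "f (map2 (-) x y) = f x - f y" using x y unfolding B_def f_def by (simp add: dot_sub lc)
    show "map2 (+) (map2 (-) x y) y = x" using x y pm unfolding B_def by auto
    show "map2 (-) (map2 (+) x y) y = x" using x y mp unfolding B_def by auto
  qed
  have z0: "replicate k 0 \<in> B" unfolding B_def using M_zero by auto
  have fz: "f (replicate k 0) = 0" unfolding f_def dot_def using lc by simp
  have idA: "is_ideal (f ` A)" unfolding is_ideal_def
  proof (intro conjI ballI allI)
    show "0 \<in> f ` A" using z0 BA fz by force
    fix a b assume "a \<in> f ` A" "b \<in> f ` A"
    then obtain x y where xy: "x \<in> A" "y \<in> A" "a = f x" "b = f y" by blast
    then have "a + b = f (map2 (+) x y)" "map2 (+) x y \<in> A" unfolding A_def f_def by (simp_all add: dot_add lc)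
    then show "a + b \<in> f ` A" by blast
  next
    fix a r assume "a \<in> f ` A"
    then obtain x where x: "x \<in> A" "a = f x" by blast
    then have "r * a = f (map ((*) r) x)" "map ((*) r) x \<in> A" unfolding A_def f_def by (simp_all add: dot_scale lc)
    then show "r * a \<in> f ` A" by blast
  qed
  have nzA: "f ` A \<noteq> {0}"
  proof
    assume h: "f ` A = {0}"
    obtain i where i: "i < k" "c ! i \<noteq> 0" using nz by blast
    have "(replicate k 0)[i := 1] \<in> A" unfolding A_def by simp
    moreover have "f ((replicate k 0)[i := 1]) = c ! i" unfolding f_def using dot_unit[of i c] i lc by simp
    ultimately have "c ! i \<in> f ` A" by (metis imageI)
    then show False using h i by simp
  qed
  have imB: "f ` B = (\<lambda>x. g * x) ` (f ` A)"
  proof (intro set_eqI iffI)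
    fix z assume "z \<in> f ` B"
    then obtain w where w: "w \<in> B" "z = f w" by blast
    define w' where "w' = map (\<lambda>x. SOME r. x = r * g) w"
    have wi: "w ! i = w' ! i * g" if "i < k" for i
    proof -
      have "\<exists>r. w ! i = r * g" using w that unfolding B_def pideal_iff by blast
      then have "w ! i = (SOME r. w ! i = r * g) * g" by (rule someI_ex)
      then show ?thesis unfolding w'_def using w that unfolding B_def by simp
    qed
    have wm: "w = map ((*) g) w'" using w wi unfolding B_def
      by (intro nth_equalityI) (auto simp: mult.commute w'_def)
    have "f w = f (map ((*) g) w')" by (rule arg_cong[where f = f, OF wm])
    also have "\<dots> = g * f w'" unfolding f_def
    proof (rule dot_scale)
      show "length w' = length c" using w lc unfolding B_def w'_def by simp
    qed
    finally have "z = g * f w'" using w by simp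
    moreover have "w' \<in> A" using w unfolding A_def B_def w'_def by simp
    ultimately show "z \<in> (\<lambda>x. g * x) ` (f ` A)" by blast
  next
    fix z assume "z \<in> (\<lambda>x. g * x) ` (f ` A)"
    then obtain w' where w': "w' \<in> A" "z = g * f w'" by blast
    have "map ((*) g) w' \<in> B" using w' unfolding A_def B_def pideal_iff by (auto simp: mult.commute)
    moreover have "z = f (map ((*) g) w')" using w' unfolding f_def A_def by (simp add: dot_scale lc)
    ultimately show "z \<in> f ` B" by blast
  qed
  have cI: "card (f ` A) = q * card (f ` B)" unfolding imB by (rule ideal_card[OF idA nzA])
  define K where "K = card (f ` B)"
  define ZA where "ZA = card {w\<in>A. f w = 0}"
  define ZB where "ZB = card {w\<in>B. f w = 0}"
  define wt where "wt = card {v\<in>S k. dot c v \<noteq> 0}"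
  have K1: "K \<ge> 1"
  proof -
    have "f ` B \<noteq> {}" using z0 by blast
    moreover have "finite (f ` B)" using finB by simp
    ultimately have "card (f ` B) > 0" by (simp add: card_gt_0_iff)
    then show ?thesis unfolding K_def by simp
  qed
  have ZAle: "ZA \<le> card A" unfolding ZA_def using finA by (intro card_mono) auto
  have ZBle: "ZB \<le> card B" unfolding ZB_def using finB by (intro card_mono) auto
  have nzAc: "card {w\<in>A. f w \<noteq> 0} = card A - ZA"
  proof -
    have "{w\<in>A. f w \<noteq> 0} = A - {w\<in>A. f w = 0}" by auto
    then show ?thesis unfolding ZA_def using finA by (simp add: card_Diff_subset)
  qed
  have nzBc: "card {w\<in>B. f w \<noteq> 0} = card B - ZB"
  proof -
    have "{w\<in>B. f w \<noteq> 0} = B - {w\<in>B. f w = 0}" by auto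
    then show ?thesis unfolding ZB_def using finB by (simp add: card_Diff_subset)
  qed
  have Eeq: "{w. length w = k \<and> \<not> (\<forall>i<k. w ! i \<in> M) \<and> dot c w \<noteq> 0} = {w\<in>A. f w \<noteq> 0} - {w\<in>B. f w \<noteq> 0}"
    unfolding A_def B_def f_def by auto
  have sub: "{w\<in>B. f w \<noteq> 0} \<subseteq> {w\<in>A. f w \<noteq> 0}" using BA by auto
  have finA': "finite {w\<in>A. f w \<noteq> 0}" using finA by simp
  have cE: "card {w. length w = k \<and> \<not> (\<forall>i<k. w ! i \<in> M) \<and> dot c w \<noteq> 0} = (card A - ZA) - (card B - ZB)"
    unfolding Eeq using card_Diff_subset[OF finite_subset[OF sub finA'] sub] nzAc nzBc by simp
  have le: "card B - ZB \<le> card A - ZA" using card_mono[OF finA' sub] nzAc nzBc by simp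
  have cUM: "card (UNIV - M) = q ^ s - q ^ (s - 1)"
    using card_Diff_subset[of M UNIV] card_UNIV card_M by simp
  have qs: "q ^ s = q * q ^ (s - 1)" using s_pos by (metis Suc_diff_le diff_Suc_1 power_Suc)
  have main: "(q * q ^ (s - 1) - q ^ (s - 1)) * wt = (card A - ZA) - (card B - ZB)"
    using U_S_count[OF lc] cE cUM qs unfolding wt_def by simp
  have X: "card A = q ^ (s * (k - 1)) * q * q ^ (s - 1)"
  proof -
    have "s * k = s * (k - 1) + 1 + (s - 1)" using k1 s_pos by (simp add: algebra_simps)
    then show ?thesis using cA by (simp add: power_add)
  qed
  have XP: "q * card B \<le> card A"
  proof -
    have "q * card B = q ^ (Suc ((s - 1) * k))" using cB by simp
    also have "\<dots> \<le> q ^ (s * k)"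
    proof (rule power_increasing)
      have e: "(s - 1 + 1) * k = s * k" using s_pos by simp
      have "(s - 1 + 1) * k = (s - 1) * k + k" by (simp add: algebra_simps)
      then show "Suc ((s - 1) * k) \<le> s * k" using k1 e by linarith
      show "1 \<le> q" using q_ge2 by simp
    qed
    finally show ?thesis using cA by simp
  qed
  have XA: "card A = q * K * ZA" using kerA cI unfolding K_def ZA_def by simp
  have PB: "card B = K * ZB" using kerB unfolding K_def ZB_def by simp
  have m1: "q ^ (s - 1) \<ge> 1" using q_ge2 by simp
  note AC = arith_core[OF q_ge2 m1 K1 X XP XA PB ZAle ZBle le main]
  show "card {v\<in>S k. dot c v \<noteq> 0} \<ge> q ^ (s * (k - 1))" using AC(1) unfolding wt_def .
  assume "dot c ` {w. length w = k \<and> (\<forall>i<k. w ! i \<in> M)} = {0}"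
  then have "K = 1" unfolding K_def f_def B_def by simp
  then show "card {v\<in>S k. dot c v \<noteq> 0} = q ^ (s * (k - 1))" using AC(2) unfolding wt_def by simp
qed

end


lemma lincomb_cols:
  assumes w: "wfm k G" and lc: "length c = k"
  shows "lincomb (ncols G) c G = map (dot c) (cols G)"
proof -
  have "length G = k" using w unfolding wfm_def by simp
  then show ?thesis unfolding lincomb_def cols_def dot_def col_def using lc by simp
qed

lemma hamming_cols:
  assumes d: "distinct CL"
  shows "hamming_dist (map (dot c) CL) (map (dot c') CL) = card {v\<in>set CL. dot c v \<noteq> dot c' v}"
proof -
  have "hamming_dist (map (dot c) CL) (map (dot c') CL) = card {i. i < length CL \<and> dot c (CL ! i) \<noteq> dot c' (CL ! i)}"
    unfolding hamming_dist_def by (intro arg_cong[where f = card] Collect_cong) auto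
  also have "\<dots> = card ((!) CL ` {i. i < length CL \<and> dot c (CL ! i) \<noteq> dot c' (CL ! i)})"
    using d by (intro card_image[symmetric] inj_onI) (auto simp: nth_eq_iff_index_eq)
  also have "(!) CL ` {i. i < length CL \<and> dot c (CL ! i) \<noteq> dot c' (CL ! i)} = {v\<in>set CL. dot c v \<noteq> dot c' v}"
    by (auto simp: in_set_conv_nth)
  finally show ?thesis .
qed

context cr begin

lemma code_eq:
  assumes CL: "set CL = S k" and lc: "length c = k" and lc': "length c' = k"
    and e: "map (dot c) CL = map (dot c') CL"
  shows "c = c'"
proof (rule nth_equalityI)
  show "length c = length c'" using lc lc' by simp
  fix i assume i: "i < length c"
  have "(replicate k 0)[i := 1] \<in> set CL" using CL unit_S i lc by simp
  then have "dot c ((replicate k 0)[i := 1]) = dot c' ((replicate k 0)[i := 1])"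
    using e by (simp add: map_eq_conv)
  then show "c ! i = c' ! i" using dot_unit[of i c] dot_unit[of i c'] i lc lc' by simp
qed

lemma dot_c0:
  assumes "w \<in> {w. length w = Suc k' \<and> (\<forall>i<Suc k'. w ! i \<in> M)}"
  shows "dot (g ^ (s - 1) # replicate k' 0) w = 0"
proof -
  have "dot (g ^ (s - 1) # replicate k' 0) w = g ^ (s - 1) * w ! 0"
    unfolding dot_def by (simp add: sum.lessThan_Suc_shift del: sum.lessThan_Suc)
  moreover obtain r where "w ! 0 = r * g" using assms unfolding pideal_iff by auto
  ultimately have "dot (g ^ (s - 1) # replicate k' 0) w = r * (g * g ^ (s - 1))" by (simp add: ac_simps)
  then show ?thesis using gpow nil by simp
qed

theorem main:
  assumes k: "k \<ge> 1"
  shows "int (ncols (Gbeta g s T k)) =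
           (\<Sum>i<code_rank (ncols (Gbeta g s T k)) (Sbeta g s T k).
              \<lceil>real (min_dist (Sbeta g s T k)) / real (length T) ^ i\<rceil>)"
proof -
  obtain k' where kk: "k = Suc k'" using k by (cases k) auto
  define G where "G = Gbeta g s T k"
  define n where "n = ncols G"
  define CL where "CL = cols G"
  define W where "W = q ^ (s * (k - 1))"
  define C where "C = Sbeta g s T k"
  have wG: "wfm k G" and dG: "distinct CL" and sG: "set CL = S k"
    using Gbeta_props[of k'] unfolding G_def CL_def kk by auto
  have lG: "length G = k" using wG unfolding wfm_def by simp
  have Ceq: "C = (\<lambda>c. map (dot c) CL) ` {c. length c = k}"
  proof -
    have "C = {lincomb n c G |c. length c = k}" unfolding C_def Sbeta_def rspan_def n_def G_def[symmetric] lG ..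
    also have "\<dots> = (\<lambda>c. lincomb n c G) ` {c. length c = k}" by blast
    also have "\<dots> = (\<lambda>c. map (dot c) CL) ` {c. length c = k}"
      by (rule image_cong) (simp_all add: lincomb_cols[OF wG] n_def CL_def)
    finally show ?thesis .
  qed
  have injC: "inj_on (\<lambda>c. map (dot c) CL) {c. length c = k}"
    using code_eq[OF sG] by (intro inj_onI) auto
  have finC: "finite C" unfolding Ceq using finite_vecs by simp
  have cardC: "card C = q ^ (s * k)" unfolding Ceq using card_image[OF injC] card_vecs by simp
  define D where "D = {hamming_dist x y |x y. x \<in> C \<and> y \<in> C \<and> x \<noteq> y}"
  have finD: "finite D"
  proof -
    have "D \<subseteq> (\<lambda>(x, y). hamming_dist x y) ` (C \<times> C)" unfolding D_def by auto
    then show ?thesis using finC finite_subset by blast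
  qed
  have lower: "W \<le> d" if dD: "d \<in> D" for d
  proof -
    obtain x y where xy: "d = hamming_dist x y" "x \<in> C" "y \<in> C" "x \<noteq> y" using dD unfolding D_def by blast
    obtain c c' where cc: "x = map (dot c) CL" "y = map (dot c') CL" "length c = k" "length c' = k"
      using xy unfolding Ceq by blast
    define dd where "dd = map2 (-) c c'"
    have ldd: "length dd = k" unfolding dd_def using cc by simp
    have eqd: "dot c v \<noteq> dot c' v \<longleftrightarrow> dot dd v \<noteq> 0" for v
      using dot_sub_left[of c' c v] cc unfolding dd_def by (metis eq_iff_diff_eq_0)
    have hd: "d = card {v\<in>S k. dot dd v \<noteq> 0}"
      using xy(1) hamming_cols[OF dG, of c c'] cc sG eqd by simp
    obtain v where "v \<in> set CL" "dot c v \<noteq> dot c' v" using xy(4) cc by (auto simp: map_eq_conv)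
    then have "dot dd v \<noteq> 0" using eqd by simp
    then have "\<exists>i<k. dd ! i \<noteq> 0" using dot_nonzero_imp ldd by fastforce
    then show ?thesis using count_main(1)[OF ldd k] hd unfolding W_def by simp
  qed
  have WD: "W \<in> D"
  proof -
    define c0 where "c0 = g ^ (s - 1) # replicate k' (0::'a)"
    have lc0: "length c0 = k" unfolding c0_def kk by simp
    have nz: "\<exists>i<k. c0 ! i \<noteq> 0" using nil_min s_pos unfolding c0_def kk by auto
    have B0: "dot c0 ` {w. length w = k \<and> (\<forall>i<k. w ! i \<in> M)} = {0}"
    proof (intro equalityI subsetI)
      fix z assume "z \<in> dot c0 ` {w. length w = k \<and> (\<forall>i<k. w ! i \<in> M)}"
      then obtain w where w: "w \<in> {w. length w = k \<and> (\<forall>i<k. w ! i \<in> M)}" "z = dot c0 w" by blast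
      have "dot c0 w = 0" using dot_c0[of w k'] w(1) unfolding c0_def kk by simp
      then show "z \<in> {0}" using w by simp
    next
      fix z :: 'a assume "z \<in> {0}"
      have r: "replicate k 0 \<in> {w. length w = k \<and> (\<forall>i<k. w ! i \<in> M)}" using M_zero by simp
      have "dot c0 (replicate k 0) = 0" using dot_c0[OF r[unfolded kk]] unfolding c0_def kk .
      then have z: "z = dot c0 (replicate k 0)" using \<open>z \<in> {0}\<close> by simp
      from r show "z \<in> dot c0 ` {w. length w = k \<and> (\<forall>i<k. w ! i \<in> M)}" unfolding z by (rule imageI)
    qed
    have cw: "card {v\<in>S k. dot c0 v \<noteq> 0} = W" using count_main(2)[OF lc0 k nz B0] unfolding W_def .
    define x where "x = map (dot c0) CL"
    define y where "y = map (dot (replicate k 0)) CL"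
    have hxy: "hamming_dist x y = W"
      using hamming_cols[OF dG, of c0 "replicate k 0"] sG cw unfolding x_def y_def by (simp add: dot_zero_left)
    have "W > 0" unfolding W_def using q_ge2 by simp
    then have "x \<noteq> y" using hxy unfolding hamming_dist_def by auto
    moreover have "x \<in> C" "y \<in> C" unfolding Ceq x_def y_def using lc0 by auto
    ultimately show ?thesis using hxy unfolding D_def by blast
  qed
  have md: "min_dist C = W"
    unfolding min_dist_def D_def[symmetric] using finD lower WD by (intro Min_eqI) auto
  have Pk: "\<exists>C'. C \<subseteq> C' \<and> free_submodule_rank n C' k"
  proof (intro exI conjI)
    show "C \<subseteq> C" by simp
    show "free_submodule_rank n C k" unfolding free_submodule_rank_def
    proof (intro exI conjI)
      show "length G = k" by (rule lG)
      show "\<forall>v\<in>set G. length v = n" using wG unfolding wfm_def n_def by simp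
      show "rspan n G = C" unfolding C_def Sbeta_def n_def G_def ..
      show "lin_indep n G" unfolding lin_indep_def
      proof (intro allI impI)
        fix c i assume h: "length c = length G \<and> lincomb n c G = replicate n 0" and i: "i < length G"
        then have lc: "length c = k" using lG by simp
        have "map (dot c) CL = replicate n 0" using h lincomb_cols[OF wG lc] unfolding n_def CL_def by simp
        also have "\<dots> = map (dot (replicate k 0)) CL"
        proof -
          have "dot (replicate k (0::'a)) = (\<lambda>v. 0)" by (rule ext) (rule dot_zero_left)
          then show ?thesis unfolding n_def CL_def by (simp add: map_replicate_const)
        qed
        finally have "c = replicate k 0" using code_eq[OF sG lc] by simp
        then show "c ! i = 0" using lG i by simp
      qed
    qed
  qed
  have Pr: "k \<le> r" if ex: "\<exists>C'. C \<subseteq> C' \<and> free_submodule_rank n C' r" for r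
  proof -
    obtain C' vs where h: "C \<subseteq> C'" "length vs = r" "rspan n vs = C'"
      using ex unfolding free_submodule_rank_def by blast
    have C'eq: "C' = (\<lambda>c. lincomb n c vs) ` {c. length c = r}"
      using h unfolding rspan_def by auto
    have "card C \<le> card C'" using h(1) C'eq finite_vecs by (intro card_mono) auto
    also have "\<dots> \<le> card {c :: 'a list. length c = r}" unfolding C'eq by (rule card_image_le[OF finite_vecs])
    finally have "q ^ (s * k) \<le> q ^ (s * r)" using cardC card_vecs by simp
    then have "s * k \<le> s * r" using q_ge2 by (simp add: power_le_imp_le_exp)
    then show ?thesis using s_pos by simp
  qed
  have cr: "code_rank n C = k"
    unfolding code_rank_def by (rule Least_equality) (use Pk Pr in auto)
  have "int n = (\<Sum>i<k. int (q ^ (s * k' - i)))"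
    using ncols_Gbeta_formula[of k'] unfolding n_def G_def kk by simp
  also have "\<dots> = (\<Sum>i<k. \<lceil>real W / real q ^ i\<rceil>)"
  proof (intro sum.cong refl)
    fix i assume "i \<in> {..<k}"
    then have "i \<le> s * k'" using s_pos kk by (simp add: le_trans[of i k' "s * k'"])
    then have "q ^ (s * k') = q ^ (s * k' - i) * q ^ i" by (simp add: power_add[symmetric])
    then have "real W / real q ^ i = real (q ^ (s * k' - i))" unfolding W_def kk using q_ge2 by simp
    then show "int (q ^ (s * k' - i)) = \<lceil>real W / real q ^ i\<rceil>" by (metis ceiling_of_nat)
  qed
  finally show ?thesis using md cr unfolding n_def G_def C_def by simp
qed

end

theorem proposition3p29:
  fixes \<gamma> :: "'a::{comm_ring_1, finite}" and s :: nat and T :: "'a list" and k :: nat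
  assumes chain: "chain_ring TYPE('a)"
    and max: "maximal_ideal (pideal \<gamma>)"
    and nil: "\<gamma> ^ s = 0" and nil_min: "\<forall>t<s. \<gamma> ^ t \<noteq> 0"
    and reps: "coset_reps \<gamma> T"
    and T0: "T ! 0 = 0" and T1: "T ! 1 = 1"
    and k: "k \<ge> 1"
  shows "int (ncols (Gbeta \<gamma> s T k)) =
           (\<Sum>i<code_rank (ncols (Gbeta \<gamma> s T k)) (Sbeta \<gamma> s T k).
              \<lceil>real (min_dist (Sbeta \<gamma> s T k)) / real (length T) ^ i\<rceil>)"
proof -
  interpret cr \<gamma> s T using max nil nil_min reps T0 T1 by unfold_locales
  show ?thesis using main[OF k] .
qed


end
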